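(* Let $m\ge2$ be an integer and $k\ge0$. Then \[ \zeta^t(\{m\}_k)=\sum_{j=0}^k t^j\zeta^\star(\{m\}_j)(1-t)^{k-j}\zeta(\{m\}_{k-j}), \] and \[ \zeta^t(\{m\}_k)=\frac1{k!}B_k(x_1,\dots,x_k),\qquad x_\ell=(\ell-1)!\,\zeta(m\ell)\big(t^\ell-(t-1)^\ell\big). \]
   Context: For $\vec\ell=(\ell_1,\dots,\ell_k)$ with $\ell_1\ge\cdots\ge\ell_k\ge1$ let $\sigma(\vec\ell)=|\{1\le j\le k-1:\ell_j=\ell_{j+1}\}|$. Define $\zeta^t(\{m\}_k)=\sum_{\ell_1\ge\cdots\ge\ell_k\ge1}t^{\sigma(\vec\ell)}\prod_i\ell_i^{-m}$, $\zeta(\{m\}_k)=\sum_{\ell_1>\cdots>\ell_k\ge1}\prod_i\ell_i^{-m}$, $\zeta^\star(\{m\}_k)=\sum_{\ell_1\ge\cdots\ge\ell_k\ge1}\prod_i\ell_i^{-m}$ (all $=1$ for $k=0$), and $\zeta(s)=\sum_{j\ge1}j^{-s}$. Complete Bell polynomials: $\exp(\sum_{\ell\ge1}x_\ell z^\ell/\ell!)=\sum_{j\ge0}B_j(x_1,\dots,x_j)z^j/j!$. *)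

theory Defs
  imports "HOL-Analysis.Analysis" "HOL-Computational_Algebra.Formal_Power_Series"
begin

definition weak_tuples :: "nat \<Rightarrow> nat list set" where
  "weak_tuples k = {l. length l = k \<and> sorted_wrt (\<ge>) l \<and> (\<forall>x\<in>set l. 1 \<le> x)}"

definition strict_tuples :: "nat \<Rightarrow> nat list set" where
  "strict_tuples k = {l. length l = k \<and> sorted_wrt (>) l \<and> (\<forall>x\<in>set l. 1 \<le> x)}"

text \<open>sigma(l) = number of j (1 <= j <= k-1) with l_j = l_(j+1); 0-based here.\<close>
definition sigma_eq :: "nat list \<Rightarrow> nat" where
  "sigma_eq l = card {j. Suc j < length l \<and> l ! j = l ! Suc j}"

definition mzv_term :: "nat \<Rightarrow> nat list \<Rightarrow> real" where
  "mzv_term m l = (\<Prod>x\<leftarrow>l. 1 / real x ^ m)"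

definition zeta_t :: "real \<Rightarrow> nat \<Rightarrow> nat \<Rightarrow> real" where
  "zeta_t t m k = (\<Sum>\<^sub>\<infinity> l\<in>weak_tuples k. t ^ sigma_eq l * mzv_term m l)"

definition zeta_mzv :: "nat \<Rightarrow> nat \<Rightarrow> real" where
  "zeta_mzv m k = (\<Sum>\<^sub>\<infinity> l\<in>strict_tuples k. mzv_term m l)"

definition zeta_star :: "nat \<Rightarrow> nat \<Rightarrow> real" where
  "zeta_star m k = (\<Sum>\<^sub>\<infinity> l\<in>weak_tuples k. mzv_term m l)"

definition rzeta :: "nat \<Rightarrow> real" where
  "rzeta s = (\<Sum>j. 1 / real (Suc j) ^ s)"

text \<open>Complete Bell polynomials via exp(sum_l x_l z^l / l!) = sum_j B_j z^j / j!.
  The variables are x 1, x 2, ... (x 0 unused).\<close>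
definition bell_complete :: "nat \<Rightarrow> (nat \<Rightarrow> real) \<Rightarrow> real" where
  "bell_complete j x = fact j *
     fps_nth (fps_exp 1 oo Abs_fps (\<lambda>l. if l = 0 then 0 else x l / fact l)) j"

end

theory Submission
  imports Defs
begin

unbundle no vec_syntax
unbundle fps_syntax


lemma sigma_Nil[simp]: "sigma_eq [] = 0"
  by (simp add: sigma_eq_def)

lemma sigma_Cons: "sigma_eq (x # r) = sigma_eq r + (if r \<noteq> [] \<and> x = hd r then 1 else 0)"
proof -
  let ?S = "{j. Suc j < length r \<and> r ! j = r ! Suc j}"
  let ?S' = "{j. Suc j < length (x#r) \<and> (x#r) ! j = (x#r) ! Suc j}"
  have eq: "?S' = (if r \<noteq> [] \<and> x = hd r then {0} else {}) \<union> Suc ` ?S"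
  proof (intro set_eqI iffI)
    fix j assume "j \<in> ?S'"
    then show "j \<in> (if r \<noteq> [] \<and> x = hd r then {0} else {}) \<union> Suc ` ?S"
      by (cases j) (auto simp: hd_conv_nth)
  next
    fix j assume "j \<in> (if r \<noteq> [] \<and> x = hd r then {0} else {}) \<union> Suc ` ?S"
    then show "j \<in> ?S'"
      by (auto simp: hd_conv_nth split: if_splits)
  qed
  have fin: "finite ?S" by (rule finite_subset[of _ "{..<length r}"]) auto
  have "card ?S' = card ((if r \<noteq> [] \<and> x = hd r then {0} else {}) \<union> Suc ` ?S)"
    using eq by simp
  also have "\<dots> = (if r \<noteq> [] \<and> x = hd r then 1 else 0) + card (Suc ` ?S)"
    using fin by (subst card_Un_disjoint) auto
  also have "card (Suc ` ?S) = card ?S" by (simp add: card_image)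
  finally show ?thesis by (simp add: sigma_eq_def)
qed

lemma sigma_le_length: "sigma_eq l \<le> length l"
  by (induction l) (auto simp: sigma_Cons)

lemma mzv_Nil[simp]: "mzv_term m [] = 1" by (simp add: mzv_term_def)
lemma mzv_Cons: "mzv_term m (x # r) = 1 / real x ^ m * mzv_term m r"
  by (simp add: mzv_term_def)
lemma mzv_nonneg: "0 \<le> mzv_term m l"
  by (induction l) (auto simp: mzv_Cons)

lemma sigma_zero_iff: "sorted_wrt (\<ge>) l \<Longrightarrow> sigma_eq l = 0 \<longleftrightarrow> sorted_wrt (>) (l::nat list)"
proof (induction l)
  case Nil then show ?case by simp
next
  case (Cons x r)
  have "(\<forall>y\<in>set r. x > y) \<longleftrightarrow> \<not>(r \<noteq> [] \<and> x = hd r)"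
  proof (cases r)
    case (Cons h r')
    with Cons.prems show ?thesis by (auto)
  qed simp
  with Cons show ?case by (auto simp: sigma_Cons)
qed

definition Wb :: "nat \<Rightarrow> nat \<Rightarrow> nat list set" where
  "Wb N k = {l \<in> weak_tuples k. \<forall>x\<in>set l. x \<le> N}"

lemma finite_Wb: "finite (Wb N k)"
  by (rule finite_subset[of _ "{xs. set xs \<subseteq> {..N} \<and> length xs = k}"])
     (auto simp: Wb_def weak_tuples_def intro: finite_lists_length_eq)

lemma Wb_0: "Wb N 0 = {[]}"
  by (auto simp: Wb_def weak_tuples_def)

lemma Wb_zero_Suc: "Wb 0 (Suc k) = {}"
  by (auto simp: Wb_def weak_tuples_def length_Suc_conv)

lemma Wb_sub: "Wb N k \<subseteq> weak_tuples k" by (auto simp: Wb_def)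

definition Hs :: "nat \<Rightarrow> nat \<Rightarrow> nat list set" where
  "Hs N k = {l \<in> Wb N k. l \<noteq> [] \<and> hd l = N}"

lemma Wb_split: "Wb (Suc N) k = Wb N k \<union> Hs (Suc N) k"
proof (intro set_eqI iffI)
  fix l assume l: "l \<in> Wb (Suc N) k"
  show "l \<in> Wb N k \<union> Hs (Suc N) k"
  proof (cases l)
    case Nil with l show ?thesis by (auto simp: Wb_def)
  next
    case (Cons h r)
    show ?thesis
    proof (cases "h = Suc N")
      case True with l Cons show ?thesis by (auto simp: Hs_def)
    next
      case False
      with l Cons have "h \<le> N" by (auto simp: Wb_def)
      with l Cons show ?thesis by (auto simp: Wb_def weak_tuples_def)
    qed
  qed
next
  fix l assume "l \<in> Wb N k \<union> Hs (Suc N) k"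
  then show "l \<in> Wb (Suc N) k" by (auto simp: Wb_def Hs_def)
qed

lemma Wb_Hs_disj: "Wb N k \<inter> Hs (Suc N) k = {}"
  by (auto simp: Wb_def Hs_def neq_Nil_conv)

lemma Hs_Suc: "Hs (Suc N) (Suc k) = Cons (Suc N) ` Wb (Suc N) k"
proof (intro set_eqI iffI)
  fix l assume "l \<in> Hs (Suc N) (Suc k)"
  then show "l \<in> Cons (Suc N) ` Wb (Suc N) k"
    by (cases l) (auto simp: Hs_def Wb_def weak_tuples_def)
next
  fix l assume "l \<in> Cons (Suc N) ` Wb (Suc N) k"
  then show "l \<in> Hs (Suc N) (Suc k)"
    by (auto simp: Hs_def Wb_def weak_tuples_def)
qed

lemma Hs_0: "Hs N 0 = {}" by (auto simp: Hs_def Wb_0)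

lemma finite_Hs: "finite (Hs N k)"
  using finite_Wb by (auto simp: Hs_def)

definition Tt :: "real \<Rightarrow> nat \<Rightarrow> nat \<Rightarrow> nat \<Rightarrow> real" where
  "Tt t m N k = (\<Sum>l\<in>Wb N k. t ^ sigma_eq l * mzv_term m l)"

definition Ht :: "real \<Rightarrow> nat \<Rightarrow> nat \<Rightarrow> nat \<Rightarrow> real" where
  "Ht t m N k = (\<Sum>l\<in>Hs N k. t ^ sigma_eq l * mzv_term m l)"

lemma Tt_split: "Tt t m (Suc N) k = Tt t m N k + Ht t m (Suc N) k"
  unfolding Tt_def Ht_def Wb_split
  by (rule sum.union_disjoint) (auto simp: finite_Wb finite_Hs Wb_Hs_disj)

lemma Ht_0: "Ht t m N 0 = 0" by (simp add: Ht_def Hs_0)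

lemma Tt_0: "Tt t m N 0 = 1" by (simp add: Tt_def Wb_0)
lemma Tt_zero_Suc: "Tt t m 0 (Suc k) = 0" by (simp add: Tt_def Wb_zero_Suc)

lemma Ht_Suc: "Ht t m (Suc N) (Suc k) = 1 / real (Suc N) ^ m * (Tt t m N k + t * Ht t m (Suc N) k)"
proof -
  let ?a = "1 / real (Suc N) ^ m"
  let ?f = "\<lambda>l. t ^ sigma_eq l * mzv_term m l"
  have "Ht t m (Suc N) (Suc k) = (\<Sum>r\<in>Wb (Suc N) k. ?f (Suc N # r))"
    unfolding Ht_def Hs_Suc by (subst sum.reindex) auto
  also have "\<dots> = (\<Sum>r\<in>Wb N k. ?f (Suc N # r)) + (\<Sum>r\<in>Hs (Suc N) k. ?f (Suc N # r))"
    unfolding Wb_split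
    by (rule sum.union_disjoint) (auto simp: finite_Wb finite_Hs Wb_Hs_disj)
  also have "(\<Sum>r\<in>Wb N k. ?f (Suc N # r)) = (\<Sum>r\<in>Wb N k. ?a * ?f r)"
  proof (rule sum.cong)
    fix r assume r: "r \<in> Wb N k"
    have "\<not> (r \<noteq> [] \<and> Suc N = hd r)"
      using r by (cases r) (auto simp: Wb_def)
    then have "sigma_eq (Suc N # r) = sigma_eq r" by (simp add: sigma_Cons)
    then show "?f (Suc N # r) = ?a * ?f r"
      by (simp add: mzv_Cons)
  qed simp
  also have "(\<Sum>r\<in>Hs (Suc N) k. ?f (Suc N # r)) = (\<Sum>r\<in>Hs (Suc N) k. ?a * t * ?f r)"
  proof (rule sum.cong)
    fix r assume r: "r \<in> Hs (Suc N) k"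
    then show "?f (Suc N # r) = ?a * t * ?f r"
      by (simp add: sigma_Cons mzv_Cons Hs_def)
  qed simp
  finally show ?thesis
    by (simp add: Tt_def Ht_def sum_distrib_left algebra_simps)
qed

lemma Tt_one_rec: "Tt 1 m (Suc N) (Suc k) = Tt 1 m N (Suc k) + 1 / real (Suc N) ^ m * Tt 1 m (Suc N) k"
  by (simp add: Tt_split Ht_Suc)



lemma eq0: "(R::'a::comm_ring_1) = 1 + Y \<Longrightarrow> R - 1 - Y = 0" by simp
lemma eq0': "(R::'a::comm_ring_1) = A + Y \<Longrightarrow> R - A - Y = 0" by simp

lemma ring_a:
  fixes R h F A T X :: "'a::comm_ring_1"
  assumes "h = A*X*(F + T*h)" "R = 1 + T*A*X*R"
  shows "h = A*X*F*R"
proof -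
  have "h - A*X*F*R = R*(h - A*X*F - A*X*T*h) - h*(R - 1 - T*A*X*R)" by (simp add: algebra_simps)
  also have "\<dots> = 0" using eq0[OF assms(2)] eq0'[of h "A*X*F" "A*X*T*h"] assms(1) by (simp add: algebra_simps)
  finally show ?thesis by simp
qed

lemma ring_b:
  fixes R A T X :: "'a::comm_ring_1"
  assumes "R = 1 + T*A*X*R"
  shows "1 + A*X*R = (1 + T*A*X*R) * (1 + (1-T)*A*X)"
proof -
  have "(1 + A*X*R) - (1 + T*A*X*R) * (1 + (1-T)*A*X) = (1-T)*A*X*(R - 1 - T*A*X*R)" by (simp add: algebra_simps)
  also have "\<dots> = 0" by (simp only: eq0[OF assms] mult_zero_right)
  finally show ?thesis by simp
qed

lemma ring_c:
  fixes R R' c X :: "'a::comm_ring_1"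
  assumes "R = 1 + c*X*R" "R' = c*(R + X*R')"
  shows "R' = c*R*R"
proof -
  have "R' - c*R*R = R*(R' - c*R - c*X*R') - R'*(R - 1 - c*X*R)" by (simp add: algebra_simps)
  also have "\<dots> = 0" using eq0[OF assms(1)] eq0'[of R' "c*R" "c*X*R'"] assms(2) by (simp add: algebra_simps)
  finally show ?thesis by simp
qed

lemma ring_d:
  fixes R S a c d X :: "'a::comm_ring_1"
  assumes "R = 1 + c*X*R" "S = 1 + d*X*S" "a = c - d"
  shows "a*(R + X*(c*R*R)) = (1 + a*X*R)*(c*R - d*S)"
proof -
  have "a*(R + X*(c*R*R)) - (1 + a*X*R)*(c*R - d*S) =
     d*(R*(S - 1 - d*X*S) - S*(R - 1 - c*X*R)) + (a - c + d)*(R + d*X*R*S)" by (simp add: algebra_simps)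
  also have "\<dots> = 0" using eq0[OF assms(1)] eq0[OF assms(2)] assms(3) by simp
  finally show ?thesis by simp
qed




definition Ff :: "real \<Rightarrow> nat \<Rightarrow> nat \<Rightarrow> real fps" where
  "Ff t m N = Abs_fps (Tt t m N)"
definition Rg :: "real \<Rightarrow> real fps" where "Rg c = Abs_fps (\<lambda>i. c ^ i)"
definition Gg :: "real \<Rightarrow> real \<Rightarrow> real fps" where
  "Gg a b = Abs_fps (\<lambda>n. if n = 0 then 1 else a * b ^ (n - 1))"
definition sc :: "real \<Rightarrow> real fps \<Rightarrow> real fps" where
  "sc c f = Abs_fps (\<lambda>n. c ^ n * f $ n)"

lemma Rg_eq: "Rg c = 1 + fps_const c * fps_X * Rg c"
proof (rule fps_ext)
  fix n show "Rg c $ n = (1 + fps_const c * fps_X * Rg c) $ n"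
    by (cases n) (simp_all add: Rg_def mult.assoc)
qed

lemma Gg_eq: "Gg a b = 1 + fps_const a * fps_X * Rg b"
  by (rule fps_ext) (auto simp: Gg_def Rg_def mult.assoc)

lemma Ff_0: "Ff t m 0 = 1"
proof (rule fps_ext)
  fix n show "Ff t m 0 $ n = 1 $ n"
    by (cases n) (simp_all add: Ff_def Tt_0 Tt_zero_Suc)
qed

lemma Ff_Suc: "Ff t m (Suc N) = Ff t m N * Gg (1 / real (Suc N) ^ m) (t * (1 / real (Suc N) ^ m))"
proof -
  define a where "a = 1 / real (Suc N) ^ m"
  define h where "h = Abs_fps (Ht t m (Suc N))"
  have h: "h = fps_const a * fps_X * (Ff t m N + fps_const t * h)"
  proof (rule fps_ext)
    fix n show "h $ n = (fps_const a * fps_X * (Ff t m N + fps_const t * h)) $ n"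
      by (cases n) (simp_all add: h_def Ht_0 Ht_Suc a_def Ff_def mult.assoc)
  qed
  have F: "Ff t m (Suc N) = Ff t m N + h"
    by (rule fps_ext) (simp add: Ff_def h_def Tt_split)
  have R: "Rg (t*a) = 1 + fps_const t * fps_const a * fps_X * Rg (t*a)"
    using Rg_eq[of "t*a"] by (simp add: fps_const_mult)
  have "h = fps_const a * fps_X * Ff t m N * Rg (t*a)"
    by (rule ring_a[OF h R])
  then show ?thesis unfolding a_def[symmetric] F Gg_eq by (simp add: algebra_simps)
qed

lemma sc_mult: "sc c (f * g) = sc c f * sc c g"
proof (rule fps_ext)
  fix n
  have "c ^ n * (\<Sum>i=0..n. f$i * g$(n-i)) = (\<Sum>i=0..n. (c^i * f$i) * (c^(n-i) * g$(n-i)))"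
    unfolding sum_distrib_left
  proof (rule sum.cong)
    fix i assume "i \<in> {0..n}"
    then have "c ^ n = c ^ i * c ^ (n - i)" by (simp flip: power_add)
    then show "c ^ n * (f $ i * g $ (n - i)) = c ^ i * f $ i * (c ^ (n - i) * g $ (n - i))" by simp
  qed simp
  then show "sc c (f * g) $ n = (sc c f * sc c g) $ n"
    by (simp add: sc_def fps_mult_nth)
qed

lemma sc_one: "sc c 1 = 1"
  by (rule fps_ext) (simp add: sc_def)

lemma sc_Gg: "sc c (Gg a b) = Gg (c*a) (c*b)"
proof (rule fps_ext)
  fix n show "sc c (Gg a b) $ n = Gg (c*a) (c*b) $ n"
  proof (cases n)
    case (Suc k) then show ?thesis by (simp add: sc_def Gg_def power_mult_distrib)
  qed (simp add: sc_def Gg_def)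
qed

lemma Rg_0: "Rg 0 = 1"
  by (rule fps_ext) (simp add: Rg_def)

lemma Gg_factor: "Gg a (t*a) = Gg (t*a) (t*a) * Gg ((1-t)*a) 0"
proof -
  have R: "Rg (t*a) = 1 + fps_const t * fps_const a * fps_X * Rg (t*a)"
    using Rg_eq[of "t*a"] by (simp add: fps_const_mult)
  have "fps_const (1 - t) = 1 - fps_const t" by (simp add: fps_const_sub)
  then show ?thesis unfolding Gg_eq Rg_0 ring_b[OF R]
    by (simp add: fps_const_mult algebra_simps)
qed

lemma identity1: "Ff t m N = sc t (Ff 1 m N) * sc (1-t) (Ff 0 m N)"
proof (induction N)
  case 0 then show ?case by (simp add: Ff_0 sc_one)
next
  case (Suc N)
  define a where "a = 1 / real (Suc N) ^ m"
  have "Ff t m (Suc N) = Ff t m N * Gg a (t*a)" by (simp add: Ff_Suc a_def)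
  also have "\<dots> = sc t (Ff 1 m N) * sc (1-t) (Ff 0 m N) * (Gg (t*a) (t*a) * Gg ((1-t)*a) 0)"
    using Suc Gg_factor by simp
  also have "\<dots> = sc t (Ff 1 m (Suc N)) * sc (1-t) (Ff 0 m (Suc N))"
    unfolding Ff_Suc a_def[symmetric] sc_mult sc_Gg mult_1 mult_zero_left mult_zero_right
    by (simp only: mult.assoc mult.left_commute)
  finally show ?case .
qed

lemma coef1: "Tt t m N k = (\<Sum>j=0..k. t ^ j * Tt 1 m N j * ((1-t) ^ (k-j) * Tt 0 m N (k-j)))"
proof -
  have "Tt t m N k = Ff t m N $ k" by (simp add: Ff_def)
  also have "\<dots> = (\<Sum>j=0..k. t ^ j * Tt 1 m N j * ((1-t) ^ (k-j) * Tt 0 m N (k-j)))"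
    by (subst identity1) (simp add: fps_mult_nth sc_def Ff_def)
  finally show ?thesis .
qed

definition qv :: "real \<Rightarrow> nat \<Rightarrow> nat \<Rightarrow> nat \<Rightarrow> real" where
  "qv t m N j = (\<Sum>n=1..N. (1 / real n ^ m) ^ (j+1)) * (t ^ (j+1) - (t-1) ^ (j+1))"

definition Qq :: "real \<Rightarrow> nat \<Rightarrow> nat \<Rightarrow> real fps" where
  "Qq t m N = Abs_fps (qv t m N)"

lemma Qq_0: "Qq t m 0 = 0"
  by (rule fps_ext) (simp add: Qq_def qv_def)

lemma Qq_Suc: "Qq t m (Suc N) = Qq t m N +
   (fps_const (t * (1 / real (Suc N) ^ m)) * Rg (t * (1 / real (Suc N) ^ m))
    - fps_const ((t-1) * (1 / real (Suc N) ^ m)) * Rg ((t-1) * (1 / real (Suc N) ^ m)))"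
proof (rule fps_ext)
  fix i
  define a where "a = 1 / real (Suc N) ^ m"
  have "a ^ (i+1) * (t ^ (i+1) - (t-1) ^ (i+1)) = t * a * (t * a) ^ i - (t-1) * a * ((t-1) * a) ^ i"
    unfolding power_mult_distrib Suc_eq_plus1[symmetric] power_Suc by (simp add: algebra_simps)
  moreover have "qv t m (Suc N) i = qv t m N i + a ^ (i+1) * (t ^ (i+1) - (t-1) ^ (i+1))"
    unfolding qv_def a_def by (simp add: sum.cl_ivl_Suc distrib_right)
  ultimately show "Qq t m (Suc N) $ i = (Qq t m N + (fps_const (t * (1 / real (Suc N) ^ m)) * Rg (t * (1 / real (Suc N) ^ m))
    - fps_const ((t-1) * (1 / real (Suc N) ^ m)) * Rg ((t-1) * (1 / real (Suc N) ^ m)))) $ i"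
    unfolding a_def[symmetric] by (simp add: Qq_def Rg_def)
qed

lemma Rg_deriv: "fps_deriv (Rg c) = fps_const c * Rg c * Rg c"
proof -
  have "fps_deriv (Rg c) = fps_deriv (1 + fps_const c * fps_X * Rg c)"
    by (subst (1) Rg_eq) (rule refl)
  also have "\<dots> = fps_const c * (Rg c + fps_X * fps_deriv (Rg c))"
    by (simp add: algebra_simps)
  finally show ?thesis by (rule ring_c[OF Rg_eq])
qed

lemma Gg_deriv: "fps_deriv (Gg a (t*a)) = Gg a (t*a) *
   (fps_const (t*a) * Rg (t*a) - fps_const ((t-1)*a) * Rg ((t-1)*a))"
proof -
  have "fps_deriv (Gg a (t*a)) = fps_const a * (Rg (t*a) + fps_X * fps_deriv (Rg (t*a)))"
    unfolding Gg_eq by (simp add: algebra_simps)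
  also have "\<dots> = fps_const a * (Rg (t*a) + fps_X * (fps_const (t*a) * Rg (t*a) * Rg (t*a)))"
    by (simp only: Rg_deriv)
  also have "\<dots> = (1 + fps_const a * fps_X * Rg (t*a)) *
      (fps_const (t*a) * Rg (t*a) - fps_const ((t-1)*a) * Rg ((t-1)*a))"
    by (rule ring_d[OF Rg_eq Rg_eq]) (simp add: algebra_simps)
  finally show ?thesis unfolding Gg_eq .
qed

lemma identity2: "fps_deriv (Ff t m N) = Ff t m N * Qq t m N"
proof (induction N)
  case 0 then show ?case by (simp add: Ff_0 Qq_0)
next
  case (Suc N)
  define a where "a = 1 / real (Suc N) ^ m"
  have "fps_deriv (Ff t m (Suc N)) = fps_deriv (Ff t m N * Gg a (t*a))"
    by (simp add: Ff_Suc a_def)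
  also have "\<dots> = Ff t m N * fps_deriv (Gg a (t*a)) + fps_deriv (Ff t m N) * Gg a (t*a)"
    by simp
  also have "\<dots> = (Ff t m N * Gg a (t*a)) * (Qq t m N +
      (fps_const (t*a) * Rg (t*a) - fps_const ((t-1)*a) * Rg ((t-1)*a)))"
    unfolding Gg_deriv Suc by (simp add: algebra_simps)
  also have "\<dots> = Ff t m (Suc N) * Qq t m (Suc N)"
    unfolding Ff_Suc Qq_Suc a_def[symmetric] ..
  finally show ?case .
qed

lemma coef2: "real (k+1) * Tt t m N (k+1) = (\<Sum>i=0..k. Tt t m N i * qv t m N (k-i))"
proof -
  have "real (k+1) * Tt t m N (k+1) = fps_deriv (Ff t m N) $ k" by (simp add: Ff_def)
  also have "\<dots> = (\<Sum>i=0..k. Tt t m N i * qv t m N (k-i))"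
    unfolding identity2 by (simp add: fps_mult_nth Ff_def Qq_def)
  finally show ?thesis .
qed




lemma sum_shift1: "(\<Sum>n=1..N. g n) = (\<Sum>i<N. g (Suc i))"
  by (induction N) (simp_all add: sum.cl_ivl_Suc)

lemma summ_inv: "s \<ge> 2 \<Longrightarrow> summable (\<lambda>i. 1 / real (Suc i) ^ s)"
proof -
  assume s: "s \<ge> 2"
  have "summable (\<lambda>n. inverse (real n ^ s))" using inverse_power_summable[OF s] .
  then have "summable (\<lambda>n. inverse (real (Suc n) ^ s))"
    by (subst summable_Suc_iff)
  then show ?thesis by (simp add: inverse_eq_divide)
qed

definition PP :: "nat \<Rightarrow> nat \<Rightarrow> real" where "PP m N = (\<Sum>n=1..N. 1 / real n ^ m)"

lemma PP_nonneg: "0 \<le> PP m N" by (simp add: PP_def sum_nonneg)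
lemma PP_Suc: "PP m (Suc N) = PP m N + 1 / real (Suc N) ^ m" by (simp add: PP_def sum.cl_ivl_Suc)

lemma PP_le: "m \<ge> 2 \<Longrightarrow> PP m N \<le> rzeta m"
  unfolding PP_def sum_shift1 rzeta_def
  by (rule sum_le_suminf[OF summ_inv]) auto

lemma Tt_nonneg: "0 \<le> Tt 1 m N k"
  by (simp add: Tt_def sum_nonneg mzv_nonneg)

lemma Tt1_bound: "Tt 1 m N k \<le> PP m N ^ k"
proof (induction N arbitrary: k)
  case 0 then show ?case by (cases k) (simp_all add: Tt_0 Tt_zero_Suc PP_def)
next
  case (Suc N)
  show ?case
  proof (induction k)
    case 0 then show ?case by (simp add: Tt_0)
  next
    case (Suc k)
    define a where "a = 1 / real (Suc N) ^ m"
    have a0: "0 \<le> a" by (simp add: a_def)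
    have s1: "Tt 1 m (Suc N) (Suc k) = Tt 1 m N (Suc k) + a * Tt 1 m (Suc N) k"
      by (simp add: Tt_one_rec a_def)
    have s2: "Tt 1 m N (Suc k) + a * Tt 1 m (Suc N) k \<le> PP m N ^ Suc k + a * PP m (Suc N) ^ k"
      using Suc.IH \<open>\<And>k. Tt 1 m N k \<le> PP m N ^ k\<close>[of "Suc k"] a0
      by (intro add_mono mult_left_mono) auto
    have "PP m N ^ k \<le> PP m (Suc N) ^ k"
      using PP_nonneg[of m N] PP_Suc[of m N] by (intro power_mono) auto
    then have s3: "PP m N ^ Suc k \<le> PP m N * PP m (Suc N) ^ k"
      using PP_nonneg[of m N] by (simp add: mult_left_mono)
    have s4: "PP m N * PP m (Suc N) ^ k + a * PP m (Suc N) ^ k = PP m (Suc N) ^ Suc k"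
      by (simp add: PP_Suc a_def algebra_simps)
    show ?case using s1 s2 s3 s4 by linarith
  qed
qed

lemma fin_sub:
  assumes "finite F" "F \<subseteq> weak_tuples k"
  shows "\<exists>N0. \<forall>N\<ge>N0. F \<subseteq> Wb N k"
proof -
  define N0 where "N0 = Max (insert 0 (\<Union>(set ` F)))"
  have "x \<le> N0" if "l \<in> F" "x \<in> set l" for l x
    unfolding N0_def using assms(1) that by (intro Max_ge) auto
  then have "\<forall>N\<ge>N0. F \<subseteq> Wb N k"
  proof (intro allI impI subsetI)
    fix N l assume N: "N0 \<le> N" and l: "l \<in> F"
    have "\<forall>x\<in>set l. x \<le> N" using \<open>\<And>l x. l \<in> F \<Longrightarrow> x \<in> set l \<Longrightarrow> x \<le> N0\<close>[OF l] N by (meson le_trans)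
    then show "l \<in> Wb N k" using assms(2) l by (auto simp: Wb_def)
  qed
  then show ?thesis by blast
qed

lemma summ_f:
  assumes m: "m \<ge> 2"
  shows "(\<lambda>l. t ^ sigma_eq l * mzv_term m l) summable_on weak_tuples k"
proof -
  define B where "B = max 1 \<bar>t\<bar>"
  have B1: "1 \<le> B" by (simp add: B_def)
  have bnd: "norm (t ^ sigma_eq l * mzv_term m l) \<le> B ^ k * mzv_term m l" if "l \<in> weak_tuples k" for l
  proof -
    have "\<bar>t\<bar> ^ sigma_eq l \<le> B ^ sigma_eq l" by (intro power_mono) (auto simp: B_def)
    also have "\<dots> \<le> B ^ k" using sigma_le_length[of l] that B1
      by (intro power_increasing) (auto simp: weak_tuples_def)
    finally show ?thesis using mzv_nonneg[of m l]
      by (simp add: abs_mult power_abs mult_right_mono)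
  qed
  have "(\<lambda>l. norm (t ^ sigma_eq l * mzv_term m l)) summable_on weak_tuples k"
  proof (rule nonneg_bdd_above_summable_on)
    show "bdd_above (sum (\<lambda>l. norm (t ^ sigma_eq l * mzv_term m l)) ` {F. F \<subseteq> weak_tuples k \<and> finite F})"
    proof (rule bdd_aboveI2)
      fix F assume F: "F \<in> {F. F \<subseteq> weak_tuples k \<and> finite F}"
      then obtain N0 where N0: "\<forall>N\<ge>N0. F \<subseteq> Wb N k" using fin_sub by blast
      have "(\<Sum>l\<in>F. norm (t ^ sigma_eq l * mzv_term m l)) \<le> (\<Sum>l\<in>Wb N0 k. norm (t ^ sigma_eq l * mzv_term m l))"
        using N0 by (intro sum_mono2) (auto simp: finite_Wb)
      also have "\<dots> \<le> (\<Sum>l\<in>Wb N0 k. B ^ k * mzv_term m l)"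
        using Wb_sub by (intro sum_mono bnd) auto
      also have "\<dots> = B ^ k * Tt 1 m N0 k" by (simp add: Tt_def sum_distrib_left)
      also have "\<dots> \<le> B ^ k * rzeta m ^ k"
      proof -
        have "PP m N0 ^ k \<le> rzeta m ^ k" by (rule power_mono[OF PP_le[OF m] PP_nonneg])
        then have "Tt 1 m N0 k \<le> rzeta m ^ k" using Tt1_bound[of m N0 k] by linarith
        then show ?thesis by (rule mult_left_mono) (use B1 in simp)
      qed
      finally show "(\<Sum>l\<in>F. norm (t ^ sigma_eq l * mzv_term m l)) \<le> B ^ k * rzeta m ^ k" .
    qed
  qed simp
  then show ?thesis using summable_on_iff_abs_summable_on_real by blast
qed

lemma Wb_lim: "filterlim (\<lambda>N. Wb N k) (finite_subsets_at_top (weak_tuples k)) sequentially"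
  unfolding filterlim_iff
proof (intro allI impI)
  fix P assume "eventually P (finite_subsets_at_top (weak_tuples k))"
  then obtain X where X: "finite X" "X \<subseteq> weak_tuples k"
    "\<forall>Y. finite Y \<and> X \<subseteq> Y \<and> Y \<subseteq> weak_tuples k \<longrightarrow> P Y"
    by (auto simp: eventually_finite_subsets_at_top)
  obtain N0 where N0: "\<forall>N\<ge>N0. X \<subseteq> Wb N k" using fin_sub[OF X(1,2)] by blast
  have "\<forall>N\<ge>N0. P (Wb N k)"
  proof (intro allI impI)
    fix N assume "N0 \<le> N"
    then have "X \<subseteq> Wb N k" using N0 by blast
    then show "P (Wb N k)" using X(3) finite_Wb[of N k] Wb_sub[of N k] by simp
  qed
  then show "eventually (\<lambda>N. P (Wb N k)) sequentially"
    unfolding eventually_sequentially by blast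
qed

lemma Tt_lim: "m \<ge> 2 \<Longrightarrow> (\<lambda>N. Tt t m N k) \<longlonglongrightarrow> zeta_t t m k"
proof -
  assume m: "m \<ge> 2"
  have "((\<lambda>l. t ^ sigma_eq l * mzv_term m l) has_sum zeta_t t m k) (weak_tuples k)"
    unfolding zeta_t_def by (rule has_sum_infsum[OF summ_f[OF m]])
  then have "(sum (\<lambda>l. t ^ sigma_eq l * mzv_term m l) \<longlongrightarrow> zeta_t t m k) (finite_subsets_at_top (weak_tuples k))"
    by (simp add: has_sum_def)
  from filterlim_compose[OF this Wb_lim] show ?thesis by (simp add: Tt_def)
qed

lemma star_eq: "zeta_star m k = zeta_t 1 m k"
  by (simp add: zeta_star_def zeta_t_def)

lemma mzv_eq: "zeta_mzv m k = zeta_t 0 m k"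
  unfolding zeta_mzv_def zeta_t_def
proof (rule infsum_cong_neutral)
  fix l assume "l \<in> weak_tuples k - strict_tuples k"
  then have "sigma_eq l \<noteq> 0" using sigma_zero_iff[of l] by (auto simp: weak_tuples_def strict_tuples_def)
  then show "0 ^ sigma_eq l * mzv_term m l = 0" by simp
next
  fix l assume "l \<in> strict_tuples k - weak_tuples k"
  then have l1: "sorted_wrt (>) l" "length l = k" "\<forall>x\<in>set l. 1 \<le> x" "l \<notin> weak_tuples k"
    by (auto simp: strict_tuples_def)
  have "sorted_wrt (\<ge>) l" using sorted_wrt_mono_rel[of l "(>)" "(\<ge>)"] l1(1) by fastforce
  then have False using l1 by (simp add: weak_tuples_def)
  then show "mzv_term m l = 0" ..
next
  fix l assume "l \<in> strict_tuples k \<inter> weak_tuples k"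
  then have "sigma_eq l = 0" using sigma_zero_iff[of l] by (auto simp: weak_tuples_def strict_tuples_def)
  then show "mzv_term m l = 0 ^ sigma_eq l * mzv_term m l" by simp
qed

lemma qv_lim: "m \<ge> 2 \<Longrightarrow> (\<lambda>N. qv t m N j) \<longlonglongrightarrow> rzeta (m*(j+1)) * (t ^ (j+1) - (t-1) ^ (j+1))"
proof -
  assume m: "m \<ge> 2"
  have eq: "(\<Sum>n=1..N. (1 / real n ^ m) ^ (j+1)) = (\<Sum>i<N. 1 / real (Suc i) ^ (m*(j+1)))" for N
    unfolding sum_shift1 by (simp add: power_divide power_mult power_add)
  have "m*(j+1) \<ge> 2" using m by simp
  from summable_LIMSEQ[OF summ_inv[OF this]]
  have "(\<lambda>N. \<Sum>n=1..N. (1 / real n ^ m) ^ (j+1)) \<longlonglongrightarrow> rzeta (m*(j+1))"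
    unfolding eq rzeta_def .
  then show ?thesis unfolding qv_def by (intro tendsto_mult tendsto_const)
qed




lemma part1:
  assumes m: "m \<ge> 2"
  shows "zeta_t t m k = (\<Sum>j=0..k. t ^ j * zeta_star m j * (1 - t) ^ (k - j) * zeta_mzv m (k - j))"
proof -
  have "(\<lambda>N. \<Sum>j=0..k. t ^ j * Tt 1 m N j * ((1-t) ^ (k-j) * Tt 0 m N (k-j)))
     \<longlonglongrightarrow> (\<Sum>j=0..k. t ^ j * zeta_t 1 m j * ((1-t) ^ (k-j) * zeta_t 0 m (k-j)))"
    by (intro tendsto_intros Tt_lim[OF m])
  then have "(\<lambda>N. Tt t m N k) \<longlonglongrightarrow> (\<Sum>j=0..k. t ^ j * zeta_t 1 m j * ((1-t) ^ (k-j) * zeta_t 0 m (k-j)))"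
    by (simp only: coef1[symmetric])
  from LIMSEQ_unique[OF Tt_lim[OF m] this]
  show ?thesis by (simp add: star_eq mzv_eq mult.assoc)
qed

definition yy :: "real \<Rightarrow> nat \<Rightarrow> nat \<Rightarrow> real" where
  "yy t m j = rzeta (m*(j+1)) * (t ^ (j+1) - (t-1) ^ (j+1))"

lemma zrec:
  assumes m: "m \<ge> 2"
  shows "real (k+1) * zeta_t t m (k+1) = (\<Sum>i=0..k. zeta_t t m i * yy t m (k-i))"
proof -
  have "(\<lambda>N. \<Sum>i=0..k. Tt t m N i * qv t m N (k-i)) \<longlonglongrightarrow> (\<Sum>i=0..k. zeta_t t m i * yy t m (k-i))"
    unfolding yy_def by (intro tendsto_intros Tt_lim[OF m] qv_lim[OF m])
  then have "(\<lambda>N. real (k+1) * Tt t m N (k+1)) \<longlonglongrightarrow> (\<Sum>i=0..k. zeta_t t m i * yy t m (k-i))"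
    by (simp only: coef2)
  moreover have "(\<lambda>N. real (k+1) * Tt t m N (k+1)) \<longlonglongrightarrow> real (k+1) * zeta_t t m (k+1)"
    by (intro tendsto_intros Tt_lim[OF m])
  ultimately show ?thesis using LIMSEQ_unique by blast
qed

lemma z0:
  assumes m: "m \<ge> 2"
  shows "zeta_t t m 0 = 1"
proof -
  have "(\<lambda>N. Tt t m N 0) \<longlonglongrightarrow> 1" by (simp add: Tt_0)
  from LIMSEQ_unique[OF Tt_lim[OF m] this] show ?thesis .
qed

lemma part2:
  assumes m: "m \<ge> 2"
  shows "zeta_t t m k =
    bell_complete k (\<lambda>l. fact (l - 1) * rzeta (m * l) * (t ^ l - (t - 1) ^ l)) / fact k"
proof -
  define x where "x = (\<lambda>l. fact (l - 1) * rzeta (m * l) * (t ^ l - (t - 1) ^ l) :: real)"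
  define L where "L = Abs_fps (\<lambda>l. if l = 0 then 0 else x l / fact l)"
  define E where "E = fps_exp (1::real) oo L"
  have L0: "L $ 0 = 0" by (simp add: L_def)
  have dL: "fps_deriv L $ j = yy t m j" for j
  proof -
    have "fps_deriv L $ j = real (j+1) * (x (j+1) / fact (j+1))" by (simp add: L_def)
    also have "\<dots> = yy t m j"
      by (simp add: x_def yy_def fact_Suc field_simps del: of_nat_Suc)
    finally show ?thesis .
  qed
  have dE: "fps_deriv E = E * fps_deriv L"
    unfolding E_def by (simp add: fps_compose_deriv[OF L0])
  have Erec: "real (k+1) * E $ (k+1) = (\<Sum>i=0..k. E $ i * yy t m (k-i))" for k
  proof -
    have "real (k+1) * E $ (k+1) = fps_deriv E $ k" by simp
    also have "\<dots> = (\<Sum>i=0..k. E $ i * yy t m (k-i))" unfolding dE fps_mult_nth dL ..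
    finally show ?thesis .
  qed
  have E0: "E $ 0 = 1" by (simp add: E_def)
  have eq: "zeta_t t m n = E $ n" for n
  proof (induction n rule: less_induct)
    case (less n)
    show ?case
    proof (cases n)
      case 0 then show ?thesis by (simp add: z0[OF m] E0)
    next
      case (Suc k)
      have "real (k+1) * zeta_t t m (k+1) = (\<Sum>i=0..k. zeta_t t m i * yy t m (k-i))" by (rule zrec[OF m])
      also have "\<dots> = (\<Sum>i=0..k. E $ i * yy t m (k-i))"
        by (intro sum.cong refl) (simp add: less.IH Suc)
      also have "\<dots> = real (k+1) * E $ (k+1)" by (rule Erec[symmetric])
      finally show ?thesis using Suc by simp
    qed
  qed
  have "bell_complete k x / fact k = E $ k"
    by (simp add: bell_complete_def E_def L_def)
  then show ?thesis using eq[of k] by (simp add: x_def)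
qed

theorem mainTheorem11:
  fixes m k :: nat and t :: real
  assumes "m \<ge> 2"
  shows "zeta_t t m k =
           (\<Sum>j=0..k. t ^ j * zeta_star m j * (1 - t) ^ (k - j) * zeta_mzv m (k - j))
       \<and> zeta_t t m k =
           bell_complete k (\<lambda>l. fact (l - 1) * rzeta (m * l) * (t ^ l - (t - 1) ^ l)) / fact k"
  using part1[OF assms] part2[OF assms] by blast


end
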